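(* Let $(P,\leq,{}',0,1)$ be an orthogonal lub-complete poset and $x,y,z\in P$. Then the following hold: (i) $x\rightarrow_K y\approx x\vee y'\vee \mathrm{Max}\,L(x',y)$ if $x\leq y$; $x\rightarrow_K y\approx y\vee \mathrm{Max}\,L(x',y')$ if $x\perp y$; $x\rightarrow_K y\approx x'\vee (x\wedge \mathrm{Min}\,U(x',y))$ if $y\leq x$; (ii) $x\rightarrow_K 1\approx x\vee x'$, $1\rightarrow_K x\approx x$; (iii) $x\rightarrow_K 0\approx x'$, $0\rightarrow_K x\approx x\vee x'$.
   Context: $(P,\leq,{}',0,1)$ is a bounded poset with an antitone involution ${}'$ ($x\leq y\Rightarrow y'\leq x'$, $x''=x$); $x\perp y$ means $x\leq y'$; orthogonal means $x\perp y$ implies the supremum $x\vee y$ exists; lub-complete means for every lower bound $x$ of a finite subset $M$ there is a maximal lower bound of $M$ above $x$. For $A\subseteq P$, $L(A)$ and $U(A)$ are the sets of lower and upper bounds, $L(x,y)=L(\{x,y\})$ etc.; $\mathrm{Max}\,A$ and $\mathrm{Min}\,A$ are the sets of maximal and minimal elements of $A$. For $y\in P$, $A,B\subseteq P$, $y\vee A=\{y\vee a\mid a\in A\}$, $A\vee B=\{a\vee b\mid a\in A,b\in B\}$ (when all these joins exist), similarly for $\wedge$. The Kalmbach implication is $x\rightarrow_K y:=\mathrm{Max}\,L(x',y)\vee \mathrm{Max}\,L(x',y')\vee (x\wedge \mathrm{Min}\,U(x',y))$, which is well defined in such a poset. Singletons are identified with elements. *)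

theory Defs
  imports Main
begin

text \<open>Bounded poset: a type of class bounded_order (0 = bot, 1 = top).
  The involution is an explicit function c (written x' in the paper).\<close>

definition antitone_involution :: "('a::order \<Rightarrow> 'a) \<Rightarrow> bool" where
  "antitone_involution c \<longleftrightarrow> (\<forall>x y. x \<le> y \<longrightarrow> c y \<le> c x) \<and> (\<forall>x. c (c x) = x)"

definition perp :: "('a::order \<Rightarrow> 'a) \<Rightarrow> 'a \<Rightarrow> 'a \<Rightarrow> bool" where
  "perp c x y \<longleftrightarrow> x \<le> c y"

definition LB :: "'a::order set \<Rightarrow> 'a set" where
  "LB A = {x. \<forall>a\<in>A. x \<le> a}"

definition UB :: "'a::order set \<Rightarrow> 'a set" where
  "UB A = {x. \<forall>a\<in>A. a \<le> x}"

definition MaxS :: "'a::order set \<Rightarrow> 'a set" where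
  "MaxS A = {x\<in>A. \<forall>y\<in>A. x \<le> y \<longrightarrow> y = x}"

definition MinS :: "'a::order set \<Rightarrow> 'a set" where
  "MinS A = {x\<in>A. \<forall>y\<in>A. y \<le> x \<longrightarrow> y = x}"

definition is_lub :: "'a::order set \<Rightarrow> 'a \<Rightarrow> bool" where
  "is_lub A z \<longleftrightarrow> z \<in> UB A \<and> (\<forall>w\<in>UB A. z \<le> w)"

definition is_glb :: "'a::order set \<Rightarrow> 'a \<Rightarrow> bool" where
  "is_glb A z \<longleftrightarrow> z \<in> LB A \<and> (\<forall>w\<in>LB A. w \<le> z)"

definition orthogonal :: "('a::order \<Rightarrow> 'a) \<Rightarrow> bool" where
  "orthogonal c \<longleftrightarrow> (\<forall>x y. perp c x y \<longrightarrow> (\<exists>z. is_lub {x, y} z))"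

definition lub_complete :: "'a::order itself \<Rightarrow> bool" where
  "lub_complete _ \<longleftrightarrow> (\<forall>M::'a set. finite M \<longrightarrow> (\<forall>x\<in>LB M. \<exists>m\<in>MaxS (LB M). x \<le> m))"

definition join_set :: "'a::order set \<Rightarrow> 'a set \<Rightarrow> 'a set" where
  "join_set A B = {z. \<exists>a\<in>A. \<exists>b\<in>B. is_lub {a, b} z}"

definition meet_set :: "'a::order set \<Rightarrow> 'a set \<Rightarrow> 'a set" where
  "meet_set A B = {z. \<exists>a\<in>A. \<exists>b\<in>B. is_glb {a, b} z}"

definition kimp :: "('a::order \<Rightarrow> 'a) \<Rightarrow> 'a \<Rightarrow> 'a \<Rightarrow> 'a set" where
  "kimp c x y = join_set (join_set (MaxS (LB {c x, y})) (MaxS (LB {c x, c y})))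
                         (meet_set {x} (MinS (UB {c x, y})))"

end

theory Submission
  imports Defs
begin

lemma lub_le_iff: "(a::'a::order) \<le> b \<Longrightarrow> is_lub {a,b} z \<longleftrightarrow> z = b"
  unfolding is_lub_def UB_def by (auto intro: order.antisym)

lemma glb_le_iff: "(a::'a::order) \<le> b \<Longrightarrow> is_glb {a,b} z \<longleftrightarrow> z = a"
  unfolding is_glb_def LB_def by (auto intro: order.antisym)

lemma js_le: "(a::'a::order) \<le> b \<Longrightarrow> join_set {a} {b} = {b}"
  "(a::'a::order) \<le> b \<Longrightarrow> join_set {b} {a} = {b}"
  unfolding join_set_def using lub_le_iff[of a b] by (auto simp: insert_commute)

lemma ms_le: "(a::'a::order) \<le> b \<Longrightarrow> meet_set {a} {b} = {a}"
  "(a::'a::order) \<le> b \<Longrightarrow> meet_set {b} {a} = {a}"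
  unfolding meet_set_def using glb_le_iff[of a b] by (auto simp: insert_commute)

lemma MaxLB_le: "(a::'a::order) \<le> b \<Longrightarrow> MaxS (LB {a,b}) = {a}"
  "(a::'a::order) \<le> b \<Longrightarrow> MaxS (LB {b,a}) = {a}"
  unfolding MaxS_def LB_def by (auto intro: order.antisym)

lemma MinUB_le: "(a::'a::order) \<le> b \<Longrightarrow> MinS (UB {a,b}) = {b}"
  "(a::'a::order) \<le> b \<Longrightarrow> MinS (UB {b,a}) = {b}"
  unfolding MinS_def UB_def by (auto intro: order.antisym)

lemma js_union1: "join_set A B = (\<Union>a\<in>A. join_set {a} B)"
  unfolding join_set_def by auto

lemma js_union2: "join_set A B = (\<Union>b\<in>B. join_set A {b})"
  unfolding join_set_def by auto

lemma lub_assoc: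
  assumes "is_lub {a,b} (w::'a::order)"
  shows "is_lub {w,d} z \<longleftrightarrow> is_lub {a,b,d} z"
  using assms unfolding is_lub_def UB_def by (auto intro: order.trans)

lemma lub_sym: "is_lub {a,b} z = is_lub {b,a} z"
  by (simp add: insert_commute)

lemma ai_facts:
  assumes "antitone_involution c"
  shows "c (c x) = x" "x \<le> y \<Longrightarrow> c y \<le> c x" "c x \<le> c y \<longleftrightarrow> y \<le> x"
    "x \<le> c y \<longleftrightarrow> y \<le> c x"
  using assms unfolding antitone_involution_def by metis+

lemma c_top: "antitone_involution (c::'a::{order_bot,order_top} \<Rightarrow> 'a) \<Longrightarrow> c top = bot"
  "antitone_involution (c::'a::{order_bot,order_top} \<Rightarrow> 'a) \<Longrightarrow> c bot = top"
  by (metis ai_facts(1,4) bot.extremum top.extremum top.extremum_unique bot.extremum_unique)+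

lemma lub_glb_c:
  assumes "antitone_involution c" "is_lub {a,b} z"
  shows "is_glb {c a, c b} (c z)"
  using assms(2) ai_facts[OF assms(1)] unfolding is_lub_def is_glb_def UB_def LB_def
  by auto (metis)

lemma glb_exists:
  assumes "antitone_involution c" "orthogonal c"
  shows "\<exists>d. is_glb {x, c x} d"
proof -
  have "perp c (c x) x" using ai_facts[OF assms(1)] unfolding perp_def by simp
  then obtain z where "is_lub {c x, x} z" using assms(2) unfolding orthogonal_def by blast
  then have "is_glb {c (c x), c x} (c z)" using lub_glb_c[OF assms(1)] by blast
  then show ?thesis using ai_facts(1)[OF assms(1)] by auto
qed

lemma MaxLB_ne:
  assumes "lub_complete TYPE('a::order_bot)"
  shows "\<exists>m. m \<in> MaxS (LB {a, b::'a})"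
proof -
  have "bot \<in> LB {a,b}" unfolding LB_def by auto
  then show ?thesis using assms unfolding lub_complete_def by (meson finite.emptyI finite.insertI)
qed

lemma MinUB_ne:
  fixes c :: "'a::order_bot \<Rightarrow> 'a" and a b :: 'a
  assumes "antitone_involution c" "lub_complete TYPE('a)"
  shows "\<exists>m. m \<in> MinS (UB {a, b})"
proof -
  obtain m where m: "m \<in> MaxS (LB {c a, c b})" using MaxLB_ne[OF assms(2)] by blast
  have "c m \<in> MinS (UB {a, b})"
    using m ai_facts[OF assms(1)] unfolding MaxS_def MinS_def LB_def UB_def
    by auto (metis)
  then show ?thesis by blast
qed


lemma perp_part:
  fixes c :: "'a::{order_bot,order_top} \<Rightarrow> 'a"
  assumes ai: "antitone_involution c" and orth: "orthogonal c" and xy: "x \<le> c y"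
    and d: "is_glb {x, c x} d" and b: "b \<in> MaxS (LB {c x, c y})"
  shows "d \<le> b"
proof -
  note A = ai_facts[OF ai]
  have bx: "b \<le> c x" and bcy: "b \<le> c y" and bmax: "\<And>e. e \<in> LB {c x, c y} \<Longrightarrow> b \<le> e \<Longrightarrow> e = b"
    using b unfolding MaxS_def LB_def by auto
  have dx: "d \<le> x" and dcx: "d \<le> c x" using d unfolding is_glb_def LB_def by auto
  have "d \<le> c b" using dx bx A by (meson order.trans)
  then obtain e where e: "is_lub {d, b} e" using orth unfolding orthogonal_def perp_def by blast
  have "e \<le> c x" "e \<le> c y" "b \<le> e" "d \<le> e"
    using e dcx bx bcy dx xy by (auto simp: is_lub_def UB_def intro: order.trans)
  then have "e = b" using bmax unfolding LB_def by auto
  then show ?thesis using \<open>d \<le> e\<close> by simp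
qed

theorem proposition4:
  fixes c :: "'a::{order_bot,order_top} \<Rightarrow> 'a" and x y z :: 'a
  assumes "antitone_involution c" and "orthogonal c" and "lub_complete TYPE('a)"
  shows "(x \<le> y \<longrightarrow> kimp c x y = join_set (join_set {x} {c y}) (MaxS (LB {c x, y})))
       \<and> (perp c x y \<longrightarrow> kimp c x y = join_set {y} (MaxS (LB {c x, c y})))
       \<and> (y \<le> x \<longrightarrow> kimp c x y = join_set {c x} (meet_set {x} (MinS (UB {c x, y}))))
       \<and> kimp c x top = join_set {x} {c x} \<and> kimp c top x = {x}
       \<and> kimp c x bot = {c x} \<and> kimp c bot x = join_set {x} {c x}"
proof -
  note A = ai_facts[OF assms(1)]
  have ct: "c top = bot" "c bot = top" using c_top[OF assms(1)] by auto
  have orth: "\<And>a b. a \<le> c b \<Longrightarrow> \<exists>z. is_lub {a,b} z"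
    using assms(2) unfolding orthogonal_def perp_def by blast
  have lub_uniq: "\<And>S u v. is_lub S u \<Longrightarrow> is_lub S v \<Longrightarrow> u = v"
    unfolding is_lub_def by (auto intro: order.antisym)
  obtain d where d: "is_glb {x, c x} d" using glb_exists[OF assms(1,2)] by blast
  have dx: "d \<le> x" "d \<le> c x" using d unfolding is_glb_def LB_def by auto
  have mxc: "meet_set {x} {c x} = {d}"
    using d unfolding meet_set_def is_glb_def LB_def by (auto intro: order.antisym)
  have P1: "kimp c x y = join_set (join_set {x} {c y}) (MaxS (LB {c x, y}))" if xy: "x \<le> y"
  proof -
    have M2: "MaxS (LB {c x, c y}) = {c y}" using MaxLB_le(2)[of "c y" "c x"] A xy by auto
    have Mn: "meet_set {x} (MinS (UB {c x, y})) = {x}"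
    proof -
      obtain m where m: "m \<in> MinS (UB {c x, y})" using MinUB_ne[OF assms(1,3)] by blast
      have "\<And>m. m \<in> MinS (UB {c x, y}) \<Longrightarrow> x \<le> m"
        using xy unfolding MinS_def UB_def by (auto intro: order.trans)
      then show ?thesis using m unfolding meet_set_def using glb_le_iff by blast
    qed
    obtain v where v: "is_lub {x, c y} v" using orth[of x "c y"] xy A by auto
    show ?thesis
    proof (rule set_eqI)
      fix z
      have "z \<in> kimp c x y \<longleftrightarrow> (\<exists>a\<in>MaxS (LB {c x, y}). is_lub {a, c y, x} z)"
      proof
        assume "z \<in> kimp c x y"
        then show "\<exists>a\<in>MaxS (LB {c x, y}). is_lub {a, c y, x} z"
          unfolding kimp_def M2 Mn join_set_def using lub_assoc by blast
      next
        assume "\<exists>a\<in>MaxS (LB {c x, y}). is_lub {a, c y, x} z"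
        then obtain a where a: "a \<in> MaxS (LB {c x, y})" "is_lub {a, c y, x} z" by blast
        have "a \<le> y" using a(1) unfolding MaxS_def LB_def by auto
        then obtain w where w: "is_lub {a, c y} w" using orth[of a "c y"] A by auto
        show "z \<in> kimp c x y"
          unfolding kimp_def M2 Mn join_set_def using a w lub_assoc[OF w] by blast
      qed
      also have "\<dots> \<longleftrightarrow> z \<in> join_set (join_set {x} {c y}) (MaxS (LB {c x, y}))"
      proof -
        have "join_set {x} {c y} = {v}" using v lub_uniq unfolding join_set_def by auto
        then show ?thesis unfolding join_set_def using lub_assoc[OF v]
          by (auto simp: insert_commute)
      qed
      finally show "z \<in> kimp c x y \<longleftrightarrow> z \<in> join_set (join_set {x} {c y}) (MaxS (LB {c x, y}))" .
    qed
  qed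
  have P2: "kimp c x y = join_set {y} (MaxS (LB {c x, c y}))" if xy: "perp c x y"
  proof -
    have xy': "x \<le> c y" "y \<le> c x" using xy A unfolding perp_def by auto
    have M1: "MaxS (LB {c x, y}) = {y}" using MaxLB_le(2)[of y "c x"] xy' by auto
    have Mn: "MinS (UB {c x, y}) = {c x}" using MinUB_le(2)[of y "c x"] xy' by auto
    have "\<And>b w. b \<in> MaxS (LB {c x, c y}) \<Longrightarrow> is_lub {y, b} w \<Longrightarrow> d \<le> w"
      using perp_part[OF assms(1,2) xy'(1) d] unfolding is_lub_def UB_def
      by (auto intro: order.trans)
    then have "\<And>b w z. b \<in> MaxS (LB {c x, c y}) \<Longrightarrow> is_lub {y, b} w \<Longrightarrow> is_lub {w, d} z \<longleftrightarrow> z = w"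
      using lub_le_iff lub_sym by metis
    then show ?thesis unfolding kimp_def M1 Mn mxc join_set_def by auto
  qed
  have P3: "kimp c x y = join_set {c x} (meet_set {x} (MinS (UB {c x, y})))" if xy: "y \<le> x"
  proof -
    have M2: "MaxS (LB {c x, c y}) = {c x}" using MaxLB_le(1)[of "c x" "c y"] A xy by auto
    obtain a0 where a0: "a0 \<in> MaxS (LB {c x, y})" using MaxLB_ne[OF assms(3)] by blast
    have "\<And>a. a \<in> MaxS (LB {c x, y}) \<Longrightarrow> a \<le> c x" unfolding MaxS_def LB_def by auto
    then have "join_set (MaxS (LB {c x, y})) {c x} = {c x}"
      using a0 lub_le_iff unfolding join_set_def by blast
    then show ?thesis unfolding kimp_def M2 by simp
  qed
  have P4: "kimp c x top = join_set {x} {c x}"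
  proof -
    have "kimp c x top = join_set (join_set {c x} {bot}) (meet_set {x} {top})"
      unfolding kimp_def ct by (simp add: MaxLB_le MinUB_le)
    also have "\<dots> = join_set {c x} {x}" by (simp add: js_le ms_le)
    finally show ?thesis unfolding join_set_def by (auto simp: insert_commute)
  qed
  have P5: "kimp c top x = {x}"
  proof -
    have "kimp c top x = join_set (join_set {bot} {bot}) (meet_set {top} {x})"
      unfolding kimp_def ct by (simp add: MaxLB_le MinUB_le)
    also have "\<dots> = {x}" by (simp add: js_le ms_le)
    finally show ?thesis .
  qed
  have P6: "kimp c x bot = {c x}"
  proof -
    have "kimp c x bot = join_set (join_set {bot} {c x}) (meet_set {x} {c x})"
      unfolding kimp_def ct by (simp add: MaxLB_le MinUB_le)
    also have "\<dots> = {c x}" by (simp add: js_le mxc dx)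
    finally show ?thesis .
  qed
  have P7: "kimp c bot x = join_set {x} {c x}"
  proof -
    have "kimp c bot x = join_set (join_set {x} {c x}) (meet_set {bot} {top})"
      unfolding kimp_def ct by (simp add: MaxLB_le MinUB_le)
    also have "\<dots> = join_set (join_set {x} {c x}) {bot}" by (simp add: ms_le)
    also have "\<dots> = join_set {x} {c x}"
    proof -
      have "is_lub {a, bot} z \<longleftrightarrow> z = a" for a z :: 'a
        by (subst insert_commute) (simp add: lub_le_iff)
      then show ?thesis unfolding join_set_def[of _ "{bot}"] by auto
    qed
    finally show ?thesis .
  qed
  show ?thesis using P1 P2 P3 P4 P5 P6 P7 by blast
qed

end
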